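(* Let $n,d\in\mathbb N$ with $d<n$. For every continuous function $F:\mathscr C_d^n\to\mathbb R^d$ there exists $z\in\mathscr C_d^n$ with $F(z)=F(-z)$.
   Context: $\mathscr C_d^n=\{x\in[-1,1]^n:\ \text{there is }\sigma\subseteq\{1,\dots,n\}\text{ with }|\sigma|\ge n-d\text{ and }|x(i)|=1\ \forall i\in\sigma\}$, the union of all faces of the cube $[-1,1]^n$ of dimension at most $d$ (with the subspace topology). *)

theory Defs
  imports "HOL-Analysis.Analysis"
begin

text \<open>The union of all faces of dimension at most d of the cube [-1,1]^n,
  where n = CARD('n) is the dimension of the ambient space real^'n.\<close>
definition cube_skeleton :: "nat \<Rightarrow> (real^'n) set" where
  "cube_skeleton d = {x. (\<forall>i. \<bar>x $ i\<bar> \<le> 1) \<and>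
      (\<exists>\<sigma>::'n set. card \<sigma> \<ge> CARD('n) - d \<and> (\<forall>i\<in>\<sigma>. \<bar>x $ i\<bar> = 1))}"

text \<open>R^d, realised inside the product space nat => real as the vectors
  vanishing from coordinate d on.\<close>
definition Rd :: "nat \<Rightarrow> (nat \<Rightarrow> real) set" where
  "Rd d = {y. \<forall>j\<ge>d. y j = 0}"

end

theory Submission imports Defs "HOL-Homology.Homology" "HOL-Computational_Algebra.Polynomial" begin

lemma GPe:
  fixes \<phi> :: "'a::euclidean_space \<Rightarrow> 'a"
  assumes ST: "subspace S" "subspace T" "dim S < dim T" and "S \<subseteq> T"
    and contf: "continuous_on (sphere 0 1 \<inter> T) \<phi>"
    and fim: "\<phi> \<in> (sphere 0 1 \<inter> T) \<rightarrow> sphere 0 1 \<inter> T"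
    and odd: "\<And>x. x \<in> sphere 0 1 \<inter> T \<Longrightarrow> \<phi> (-x) = - \<phi> x"
  shows "\<exists>\<psi> w. continuous_on (sphere 0 1 \<inter> T) \<psi> \<and> \<psi> \<in> (sphere 0 1 \<inter> T) \<rightarrow> sphere 0 1 \<inter> T
     \<and> (\<forall>x\<in>sphere 0 1 \<inter> T. \<psi> (-x) = - \<psi> x)
     \<and> homotopic_with_canon (\<lambda>x. True) (sphere 0 1 \<inter> T) (sphere 0 1 \<inter> T) \<phi> \<psi>
     \<and> w \<in> sphere 0 1 \<inter> T \<and> w \<notin> \<psi> ` (sphere 0 1 \<inter> S)"
proof -
  have [simp]: "\<And>x. \<lbrakk>norm x = 1; x \<in> T\<rbrakk> \<Longrightarrow> norm (\<phi> x) = 1"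
    using fim by auto
  have "compact (sphere 0 1 \<inter> T)"
    by (simp add: \<open>subspace T\<close> closed_subspace compact_Int_closed)
  then obtain g0 where pfg0: "polynomial_function g0" and g0im: "g0 ` (sphere 0 1 \<inter> T) \<subseteq> T"
                and g012: "\<And>x. x \<in> sphere 0 1 \<inter> T \<Longrightarrow> norm(\<phi> x - g0 x) < 1/2"
    using Stone_Weierstrass_polynomial_function_subspace [OF _ contf _ \<open>subspace T\<close>, of "1/2"] fim
    by (auto simp: image_subset_iff_funcset)
  define g where "g \<equiv> \<lambda>x. (1/2) *\<^sub>R (g0 x - g0 (-x))"
  have pfg: "polynomial_function g"
  proof -
    have "polynomial_function (g0 \<circ> uminus)"
      by (intro polynomial_function_compose pfg0 polynomial_function_bounded_linear bounded_linear_minus bounded_linear_ident)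
    then show ?thesis unfolding g_def using pfg0 by (auto simp: o_def)
  qed
  have symT: "-x \<in> sphere 0 1 \<inter> T" if "x \<in> sphere 0 1 \<inter> T" for x
    using that \<open>subspace T\<close> by (auto simp: subspace_neg)
  have gim: "g x \<in> T" if "x \<in> sphere 0 1 \<inter> T" for x
    unfolding g_def using g0im symT[OF that] that \<open>subspace T\<close>
    by (intro subspace_scale subspace_diff) auto
  have godd: "g (-x) = - g x" for x
    by (simp add: g_def algebra_simps)
  have g12: "norm(\<phi> x - g x) < 1/2" if "x \<in> sphere 0 1 \<inter> T" for x
  proof -
    have "\<phi> x - g x = (1/2) *\<^sub>R ((\<phi> x - g0 x) - (\<phi> (-x) - g0 (-x)))"
      using odd[OF that] by (simp add: g_def algebra_simps flip: scaleR_add_left)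
    also have "norm \<dots> \<le> (1/2) * (norm (\<phi> x - g0 x) + norm (\<phi> (-x) - g0 (-x)))"
      by (simp add: norm_triangle_ineq4)
    also have "\<dots> < (1/2) * (1/2 + 1/2)"
      using g012[OF that] g012[OF symT[OF that]] by simp
    finally show ?thesis by simp
  qed
  have gnz: "g x \<noteq> 0" if "x \<in> sphere 0 1 \<inter> T" for x
    using g12 that by fastforce
  have diffg: "g differentiable_on sphere 0 1 \<inter> T"
    by (metis pfg differentiable_on_polynomial_function)
  define h where "h \<equiv> \<lambda>x. inverse(norm(g x)) *\<^sub>R g x"
  have h: "x \<in> sphere 0 1 \<inter> T \<Longrightarrow> h x \<in> sphere 0 1 \<inter> T" for x
    unfolding h_def using \<open>subspace T\<close> gim gnz subspace_mul by fastforce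
  have diffh: "h differentiable_on sphere 0 1 \<inter> T"
    unfolding h_def using gnz
    by (fastforce intro: derivative_intros diffg differentiable_on_compose [OF diffg])
  have diffhS: "h differentiable_on sphere 0 1 \<inter> S"
    using diffh differentiable_on_subset \<open>S \<subseteq> T\<close> by blast
  have hodd: "h (-x) = - h x" for x
    by (simp add: h_def godd)
  have homfg: "homotopic_with_canon (\<lambda>z. True) (sphere 0 1 \<inter> T) (T - {0}) \<phi> g"
  proof (rule homotopic_with_linear [OF contf])
    show "continuous_on (sphere 0 1 \<inter> T) g"
      using pfg by (simp add: differentiable_imp_continuous_on diffg)
  next
    have non0fg: "0 \<notin> closed_segment (\<phi> x) (g x)" if "norm x = 1" "x \<in> T" for x
    proof -
      have "\<phi> x \<in> sphere 0 1"
        using fim that by (simp add: image_subset_iff)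
      moreover have "norm(\<phi> x - g x) < 1/2"
        using g12 that by auto
      ultimately show ?thesis
        by (auto simp: norm_minus_commute dest: segment_bound)
    qed
    show "closed_segment (\<phi> x) (g x) \<subseteq> T - {0}" if "x \<in> sphere 0 1 \<inter> T" for x
    proof -
      have "convex T"
        by (simp add: \<open>subspace T\<close> subspace_imp_convex)
      then have "convex hull {\<phi> x, g x} \<subseteq> T"
        by (metis IntD2 PiE closed_segment_subset fim gim segment_convex_hull that)
      then show ?thesis
        using that non0fg segment_convex_hull by fastforce
    qed
  qed
  have conT0: "continuous_on (T - {0}) (\<lambda>y. inverse(norm y) *\<^sub>R y)"
    by (intro continuous_intros) auto
  have sub0T: "(\<lambda>y. y /\<^sub>R norm y) \<in> (T - {0}) \<rightarrow> sphere 0 1 \<inter> T"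
    by (fastforce simp: assms(2) subspace_mul)
  have hom: "homotopic_with_canon (\<lambda>x. True) (sphere 0 1 \<inter> T) (sphere 0 1 \<inter> T) \<phi> h"
    by (force simp: h_def 
           intro:  homotopic_with_eq homotopic_with_compose_continuous_left [OF homfg conT0 sub0T])
  have hS: "h ` (sphere 0 1 \<inter> S) \<subseteq> sphere 0 1 \<inter> T"
    using h \<open>S \<subseteq> T\<close> by blast
  obtain w where w: "w \<in> (sphere 0 1 \<inter> T) - h ` (sphere 0 1 \<inter> S)"
    using hS spheremap_lemma1 [OF ST \<open>S \<subseteq> T\<close> diffhS] by blast
  have conth: "continuous_on (sphere 0 1 \<inter> T) h"
    using differentiable_imp_continuous_on diffh by blast
  show ?thesis
    apply (rule exI[of _ h], rule exI[of _ w])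
    using conth h hodd hom w by auto
qed

definition ix :: "'n::finite \<Rightarrow> nat" where
  "ix \<equiv> SOME f. bij_betw f (UNIV::'n set) {..<CARD('n)}"

lemma bij_ix: "bij_betw (ix::'n::finite \<Rightarrow> nat) UNIV {..<CARD('n)}"
proof -
  have "\<exists>f. bij_betw f (UNIV::'n set) {..<CARD('n)}"
    by (rule finite_same_card_bij) auto
  then show ?thesis unfolding ix_def by (rule someI_ex)
qed

lemma ix_lt: "ix (j::'n::finite) < CARD('n)"
  using bij_ix bij_betwE by blast

lemma ix_inj: "ix (i::'n::finite) = ix j \<longleftrightarrow> i = j"
  using bij_ix by (metis bij_betw_imp_inj_on inj_eq)

definition ixinv :: "nat \<Rightarrow> 'n::finite" where
  "ixinv \<equiv> inv_into UNIV ix"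

lemma ix_ixinv: "i < CARD('n::finite) \<Longrightarrow> ix (ixinv i :: 'n) = i"
  unfolding ixinv_def using bij_ix
  by (metis bij_betw_imp_surj_on f_inv_into_f lessThan_iff)

lemma ixinv_idx: "ixinv (ix (j::'n::finite)) = j"
  unfolding ixinv_def using bij_ix
  by (metis bij_betw_imp_inj_on inv_f_f)

definition toV :: "(nat \<Rightarrow> real) \<Rightarrow> real^'n::finite" where
  "toV y = (\<chi> j. y (ix j))"

definition ofV :: "real^'n::finite \<Rightarrow> (nat \<Rightarrow> real)" where
  "ofV x = (\<lambda>i. if i < CARD('n) then x $ ixinv i else 0)"

definition Vm :: "nat \<Rightarrow> (real^'n::finite) set" where
  "Vm m = {x. \<forall>j. m < ix j \<longrightarrow> x $ j = 0}"

lemma toV_ofV [simp]: "toV (ofV x) = x"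
  by (simp add: toV_def ofV_def ix_lt ixinv_idx vec_eq_iff)

lemma ofV_toV: "(\<And>i. CARD('n::finite) \<le> i \<Longrightarrow> y i = 0) \<Longrightarrow> ofV (toV y :: real^'n) = y"
  by (auto simp: toV_def ofV_def ix_ixinv fun_eq_iff not_less)

lemma topspace_nsphere_iff:
  "x \<in> topspace (nsphere m) \<longleftrightarrow> (\<Sum>i\<le>m. (x i)^2) = 1 \<and> (\<forall>i>m. x i = 0)"
  by (simp add: nsphere)

lemma subspace_Vm: "subspace (Vm m)"
  by (auto simp: subspace_def Vm_def)

lemma norm_toV_sq:
  assumes "\<And>i. CARD('n::finite) \<le> i \<Longrightarrow> y i = 0"
  shows "(norm (toV y :: real^'n))^2 = (\<Sum>i<CARD('n). (y i)^2)"
proof -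
  have "(norm (toV y :: real^'n))^2 = (\<Sum>j\<in>UNIV. (y (ix (j::'n)))^2)"
    unfolding power2_norm_eq_inner by (simp add: inner_vec_def toV_def power2_eq_square)
  also have "\<dots> = (\<Sum>i<CARD('n). (y i)^2)"
    by (rule sum.reindex_bij_betw[OF bij_ix])
  finally show ?thesis .
qed

lemma sum_sq_extend:
  fixes m N :: nat
  assumes "m < N" "\<And>i. m < i \<Longrightarrow> y i = 0"
  shows "(\<Sum>i<N. (y i)^2) = (\<Sum>i\<le>m. ((y i)::real)^2)"
  by (rule sum.mono_neutral_right) (use assms in auto)

lemma toV_sphere:
  assumes "m < CARD('n::finite)" "y \<in> topspace (nsphere m)"
  shows "(toV y :: real^'n) \<in> sphere 0 1 \<inter> Vm m"
proof -
  have y: "(\<Sum>i\<le>m. (y i)^2) = 1" "\<And>i. m < i \<Longrightarrow> y i = 0"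
    using assms(2) by (auto simp: topspace_nsphere_iff)
  have "(norm (toV y :: real^'n))^2 = 1"
    using assms(1) y by (subst norm_toV_sq) (auto simp: sum_sq_extend)
  then have "norm (toV y :: real^'n) = 1"
    using norm_ge_zero[of "toV y :: real^'n"] by (auto simp: power2_eq_1_iff)
  moreover have "toV y \<in> (Vm m :: (real^'n) set)"
    using y by (auto simp: Vm_def toV_def)
  ultimately show ?thesis by simp
qed

lemma ofV_sphere:
  assumes "m < CARD('n::finite)" "(x::real^'n) \<in> sphere 0 1 \<inter> Vm m"
  shows "ofV x \<in> topspace (nsphere m)"
proof -
  have sup: "\<And>i. m < i \<Longrightarrow> ofV x i = 0"
    using assms by (auto simp: ofV_def Vm_def ix_ixinv)
  have "(\<Sum>i<CARD('n). (ofV x i)^2) = 1"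
  proof -
    have "(norm (toV (ofV x) :: real^'n))^2 = (\<Sum>i<CARD('n). (ofV x i)^2)"
      by (rule norm_toV_sq) (simp add: ofV_def)
    then show ?thesis using assms by simp
  qed
  then have "(\<Sum>i\<le>m. (ofV x i)^2) = 1"
    using assms(1) sup by (simp add: sum_sq_extend)
  then show ?thesis using sup by (simp add: topspace_nsphere_iff)
qed

lemma cont_toV: "continuous_map (nsphere m) (top_of_set (sphere 0 1 \<inter> Vm m)) (toV :: _ \<Rightarrow> real^'n::finite)"
  if "m < CARD('n)"
proof -
  have "continuous_on UNIV (toV :: _ \<Rightarrow> real^'n)"
    unfolding toV_def by (intro continuous_on_vec_lambda) simp
  then have "continuous_map (powertop_real UNIV) euclidean (toV :: _ \<Rightarrow> real^'n)"
    by (simp add: continuous_map_iff_continuous2 euclidean_product_topology)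
  then have "continuous_map (nsphere m) euclidean (toV :: _ \<Rightarrow> real^'n)"
    unfolding nsphere by (rule continuous_map_from_subtopology)
  then show ?thesis
    using toV_sphere[OF that] by (auto simp: continuous_map_in_subtopology)
qed

lemma cont_ofV: "continuous_map (top_of_set (sphere 0 1 \<inter> Vm m)) (nsphere m) (ofV :: real^'n::finite \<Rightarrow> _)"
  if "m < CARD('n)"
proof -
  have "continuous_on UNIV (ofV :: real^'n \<Rightarrow> _)"
    unfolding ofV_def
    apply (rule continuous_on_coordinatewise_then_product)
    subgoal for i by (cases "i < CARD('n)") (auto intro!: continuous_intros)
    done
  then have "continuous_map euclidean (powertop_real UNIV) (ofV :: real^'n \<Rightarrow> _)"
    by (simp add: continuous_map_iff_continuous2 euclidean_product_topology)
  then have "continuous_map (top_of_set (sphere 0 1 \<inter> Vm m)) (powertop_real UNIV) (ofV :: real^'n \<Rightarrow> _)"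
    by (rule continuous_map_from_subtopology)
  then show ?thesis
    using ofV_sphere[OF that] unfolding nsphere by (auto simp: continuous_map_in_subtopology topspace_nsphere_iff[symmetric] nsphere[symmetric])
qed

lemma ofV_neg: "ofV (- x) = (\<lambda>i. - ofV x i)"
  by (auto simp: ofV_def fun_eq_iff)

lemma toV_neg: "toV (\<lambda>i. - y i) = - toV y"
  by (auto simp: toV_def vec_eq_iff)

lemma nsphere_zero_beyond:
  "x \<in> topspace (nsphere m) \<Longrightarrow> m < CARD('n::finite) \<Longrightarrow> CARD('n) \<le> i \<Longrightarrow> x i = 0"
  by (auto simp: topspace_nsphere_iff)

lemma GPn:
  fixes f :: "(nat \<Rightarrow> real) \<Rightarrow> (nat \<Rightarrow> real)"
  assumes m: "m < CARD('n::finite)" "m \<noteq> 0"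
    and cf: "continuous_map (nsphere m) (nsphere m) f"
    and odd: "\<And>x. x \<in> topspace (nsphere m) \<Longrightarrow> f (\<lambda>i. - x i) = (\<lambda>i. - f x i)"
  shows "\<exists>g w. continuous_map (nsphere m) (nsphere m) g
      \<and> (\<forall>x\<in>topspace (nsphere m). g (\<lambda>i. - x i) = (\<lambda>i. - g x i))
      \<and> homotopic_with (\<lambda>x. True) (nsphere m) (nsphere m) f g
      \<and> w \<in> topspace (nsphere m) \<and> w \<notin> g ` topspace (nsphere (m - 1))"
proof -
  define S where "S = (Vm (m-1) :: (real^'n) set)"
  define T where "T = (Vm m :: (real^'n) set)"
  define \<phi> where "\<phi> = (toV \<circ> f \<circ> ofV :: real^'n \<Rightarrow> real^'n)"
  have sS: "subspace S" and sT: "subspace T"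
    by (auto simp: S_def T_def subspace_Vm)
  have ST: "S \<subseteq> T"
    by (auto simp: S_def T_def Vm_def)
  define e where "e = (toV (\<lambda>i. if i = m then 1 else 0) :: real^'n)"
  have eT: "e \<in> T" and eS: "e \<notin> S"
  proof -
    show "e \<in> T" by (auto simp: e_def T_def Vm_def toV_def)
    have "e $ ixinv m = 1" "m - 1 < ix (ixinv m :: 'n)"
      using m by (auto simp: e_def toV_def ix_ixinv)
    then show "e \<notin> S" by (auto simp: S_def Vm_def)
  qed
  have dimST: "dim S < dim T"
  proof (rule ccontr)
    assume "\<not> dim S < dim T"
    then have "dim T \<le> dim S" by simp
    then have "S = T" using subspace_dim_equal[OF sS sT ST] by blast
    then show False using eT eS by blast
  qed
  have m1: "m - 1 < CARD('n)" using m by simp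
  have ctoV: "continuous_map (nsphere m) (top_of_set (sphere 0 1 \<inter> T)) (toV :: _ \<Rightarrow> real^'n)"
    using cont_toV[OF m(1)] by (simp add: T_def)
  have cofV: "continuous_map (top_of_set (sphere 0 1 \<inter> T)) (nsphere m) (ofV :: real^'n \<Rightarrow> _)"
    using cont_ofV[OF m(1)] by (simp add: T_def)
  have cphi: "continuous_map (top_of_set (sphere 0 1 \<inter> T)) (top_of_set (sphere 0 1 \<inter> T)) \<phi>"
    unfolding \<phi>_def by (rule continuous_map_compose[OF cofV continuous_map_compose[OF cf ctoV]])
  then have contphi: "continuous_on (sphere 0 1 \<inter> T) \<phi>"
    by (simp add: continuous_map_in_subtopology continuous_map_iff_continuous)
  have phiim: "\<phi> \<in> (sphere 0 1 \<inter> T) \<rightarrow> sphere 0 1 \<inter> T"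
    using cphi by (auto simp: continuous_map_def)
  have phiodd: "\<phi> (-x) = - \<phi> x" if "x \<in> sphere 0 1 \<inter> T" for x
  proof -
    have "ofV x \<in> topspace (nsphere m)"
      using ofV_sphere[OF m(1)] that by (simp add: T_def)
    then show ?thesis
      by (simp add: \<phi>_def ofV_neg odd toV_neg)
  qed
  obtain \<psi> w' where cpsi: "continuous_on (sphere 0 1 \<inter> T) \<psi>"
    and psiim: "\<psi> \<in> (sphere 0 1 \<inter> T) \<rightarrow> sphere 0 1 \<inter> T"
    and psiodd: "\<forall>x\<in>sphere 0 1 \<inter> T. \<psi> (-x) = - \<psi> x"
    and hom: "homotopic_with_canon (\<lambda>x. True) (sphere 0 1 \<inter> T) (sphere 0 1 \<inter> T) \<phi> \<psi>"
    and w': "w' \<in> sphere 0 1 \<inter> T" "w' \<notin> \<psi> ` (sphere 0 1 \<inter> S)"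
    using GPe[OF sS sT dimST ST contphi phiim phiodd] by blast
  define g where "g = ofV \<circ> \<psi> \<circ> toV"
  have cpsi': "continuous_map (top_of_set (sphere 0 1 \<inter> T)) (top_of_set (sphere 0 1 \<inter> T)) \<psi>"
    using cpsi psiim by (auto simp: continuous_map_in_subtopology continuous_map_iff_continuous)
  have cg: "continuous_map (nsphere m) (nsphere m) g"
    unfolding g_def by (rule continuous_map_compose[OF ctoV continuous_map_compose[OF cpsi' cofV]])
  have gminus: "g (\<lambda>i. - x i) = (\<lambda>i. - g x i)" if "x \<in> topspace (nsphere m)" for x
  proof -
    have "toV x \<in> sphere 0 1 \<inter> T"
      using toV_sphere[OF m(1) that] by (simp add: T_def)
    then show ?thesis
      by (simp add: g_def toV_neg psiodd ofV_neg)
  qed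
  have hom2: "homotopic_with (\<lambda>x. True) (nsphere m) (nsphere m) (ofV \<circ> \<phi> \<circ> toV) g"
    unfolding g_def
    by (rule homotopic_with_compose_continuous_map_right[OF homotopic_with_compose_continuous_map_left[OF hom cofV] ctoV]) auto
  have hom3: "homotopic_with (\<lambda>x. True) (nsphere m) (nsphere m) f g"
  proof (rule homotopic_with_eq[OF hom2])
    fix x assume x: "x \<in> topspace (nsphere m)"
    have fx: "f x \<in> topspace (nsphere m)"
      using cf x by (auto simp: continuous_map_def)
    show "f x = (ofV \<circ> \<phi> \<circ> toV) x"
      using x fx m(1) by (simp add: \<phi>_def ofV_toV nsphere_zero_beyond)
  qed auto
  define w where "w = ofV w'"
  have wtop: "w \<in> topspace (nsphere m)"
    using ofV_sphere[OF m(1)] w' by (simp add: w_def T_def)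
  have wnot: "w \<notin> g ` topspace (nsphere (m - 1))"
  proof
    assume "w \<in> g ` topspace (nsphere (m - 1))"
    then obtain x where x: "x \<in> topspace (nsphere (m - 1))" "w = g x" by blast
    then have "(toV (ofV w') :: real^'n) = toV (ofV (\<psi> (toV x)))" by (simp add: w_def g_def)
    then have "w' = \<psi> (toV x)" by simp
    moreover have "toV x \<in> sphere 0 1 \<inter> S"
      using toV_sphere[OF m1 x(1)] by (simp add: S_def)
    ultimately show False using w' by blast
  qed
  show ?thesis
    using cg gminus hom3 wtop wnot by blast
qed

abbreviation SP :: "nat \<Rightarrow> (nat \<Rightarrow> real) set" where
  "SP m \<equiv> topspace (nsphere m)"

lemma nsphere_top: "nsphere m = top_of_set (SP m)"
  by (simp add: nsphere euclidean_product_topology)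

lemma cmap_nsphere_iff:
  "continuous_map (nsphere m) (nsphere k) f \<longleftrightarrow> continuous_on (SP m) f \<and> f ` SP m \<subseteq> SP k"
  by (metis continuous_map_subtopology_eu image_subset_iff_funcset nsphere_top)

lemma cont_coord [continuous_intros]: "continuous_on S (\<lambda>x::nat\<Rightarrow>real. x i)"
  by (rule continuous_on_subset[OF continuous_on_product_coordinates]) auto

lemma cont_coord_comp:
  "continuous_on S f \<Longrightarrow> continuous_on S (\<lambda>x. (f x :: nat \<Rightarrow> real) i)"
  by (rule continuous_on_product_then_coordinatewise)

lemma SP_minus1:
  assumes "m \<noteq> 0" "x \<in> SP (m - 1)"
  shows "x \<in> SP m" "x m = 0"
proof -
  have "nsphere (m - 1) = subtopology (nsphere m) {x. x m = 0}"
    using assms subtopology_nsphere_equator[of "m-1"] by simp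
  then have "SP (m-1) = SP m \<inter> {x. x m = 0}" by simp
  then show "x \<in> SP m" "x m = 0" using assms by auto
qed

lemma SP_neg: "x \<in> SP m \<Longrightarrow> (\<lambda>i. - x i) \<in> SP m"
  by (simp add: topspace_nsphere_iff)

definition sqs :: "nat \<Rightarrow> (nat \<Rightarrow> real) \<Rightarrow> real" where
  "sqs m v = (\<Sum>j\<le>m. (v j)^2)"

definition nz :: "nat \<Rightarrow> (nat \<Rightarrow> real) \<Rightarrow> (nat \<Rightarrow> real)" where
  "nz m v = (\<lambda>i. v i / sqrt (sqs m v))"

lemma sqs_nonneg: "0 \<le> sqs m v"
  by (simp add: sqs_def sum_nonneg)

lemma nz_SP:
  assumes "sqs m v \<noteq> 0" "\<And>i. m < i \<Longrightarrow> v i = 0"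
  shows "nz m v \<in> SP m"
proof -
  have pos: "0 < sqs m v" using assms sqs_nonneg[of m v] by simp
  have "(\<Sum>i\<le>m. (nz m v i)^2) = (\<Sum>i\<le>m. (v i)^2 / sqs m v)"
    using pos by (simp add: nz_def power_divide)
  also have "\<dots> = sqs m v / sqs m v"
    by (simp only: sqs_def sum_divide_distrib)
  also have "\<dots> = 1" using pos by simp
  finally show ?thesis using assms by (simp add: topspace_nsphere_iff nz_def)
qed

lemma nz_id: "v \<in> SP m \<Longrightarrow> nz m v = v"
  by (simp add: nz_def sqs_def topspace_nsphere_iff)

lemma nz_neg: "nz m (\<lambda>i. - v i) = (\<lambda>i. - nz m v i)"
  by (simp add: nz_def sqs_def)

lemma Cstep:
  fixes k :: "(nat \<Rightarrow> real) \<Rightarrow> (nat \<Rightarrow> real)"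
  assumes m: "m \<noteq> 0"
    and IH: "\<And>f. continuous_map (nsphere (m-1)) (nsphere (m-1)) f \<Longrightarrow>
               (\<And>x. x \<in> SP (m-1) \<Longrightarrow> f (\<lambda>i. - x i) = (\<lambda>i. - f x i)) \<Longrightarrow>
               odd (Brouwer_degree2 (m-1) f)"
    and ck: "continuous_map (nsphere m) (nsphere m) k"
    and kodd: "\<And>x. x \<in> SP m \<Longrightarrow> k (\<lambda>i. - x i) = (\<lambda>i. - k x i)"
    and em: "(\<lambda>i. if i = m then 1 else 0) \<notin> k ` SP (m-1)"
  shows "odd (Brouwer_degree2 m k)"
proof -
  define K where "K = (\<lambda>p::real \<times> (nat \<Rightarrow> real). \<lambda>i. if i = m then k (snd p) m * (1 - fst p + fst p * (snd p m)^2) else k (snd p) i)"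
  define h where "h = (\<lambda>p. nz m (K p))"
  have kSP: "k x \<in> SP m" if "x \<in> SP m" for x
    using ck that by (auto simp: continuous_map_def)
  have ksq: "(\<Sum>i\<le>m. (k x i)^2) = 1" "\<And>i. m < i \<Longrightarrow> k x i = 0" if "x \<in> SP m" for x
    using kSP[OF that] by (auto simp: topspace_nsphere_iff)
  have Ksupp: "K p i = 0" if "snd p \<in> SP m" "m < i" for p i
    using ksq(2)[OF that(1) that(2)] that by (simp add: K_def)
  have Knz: "sqs m (K p) \<noteq> 0" if p: "fst p \<in> {0..1}" "snd p \<in> SP m" for p
  proof
    assume "sqs m (K p) = 0"
    then have z: "\<forall>i\<in>{..m}. (K p i)^2 = 0"
      unfolding sqs_def by (subst sum_nonneg_eq_0_iff[symmetric]) auto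
    define t where "t = fst p"
    define x where "x = snd p"
    have x: "x \<in> SP m" using p by (simp add: x_def)
    have kxi: "k x i = 0" if "i < m" for i
      using bspec[OF z, of i] that by (simp add: K_def x_def)
    have "(\<Sum>i\<le>m. (k x i)^2) = (\<Sum>i\<in>{m}. (k x i)^2)"
      by (rule sum.mono_neutral_right) (auto simp: kxi)
    then have km: "(k x m)^2 = 1" using ksq(1)[OF x] by simp
    then have "k x m \<noteq> 0" by auto
    moreover have "k x m * (1 - t + t * (x m)^2) = 0"
      using bspec[OF z, of m] by (simp add: K_def x_def t_def)
    ultimately have e: "1 - t + t * (x m)^2 = 0" by simp
    have t01: "0 \<le> t" "t \<le> 1" using p by (auto simp: t_def)
    have "0 \<le> t * (x m)^2" using t01 by simp
    then have "t = 1" "t * (x m)^2 = 0" using e t01 by linarith+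
    then have xm: "x m = 0" by simp
    have xS: "x \<in> SP (m-1)"
      using topspace_nsphere_minus1[OF x xm] by simp
    have kx0: "k x i = 0" if "i \<noteq> m" for i
      using kxi ksq(2)[OF x] that by (cases "i < m") auto
    show False
    proof (cases "k x m = 1")
      case True
      then have "k x = (\<lambda>i. if i = m then 1 else 0)"
        using kx0 by (auto simp: fun_eq_iff)
      then show False using em xS by (metis image_eqI)
    next
      case False
      then have "k x m = -1" using km by (simp add: power2_eq_1_iff)
      then have "k (\<lambda>i. - x i) = (\<lambda>i. if i = m then 1 else 0)"
        using kx0 kodd[OF x] by (auto simp: fun_eq_iff)
      moreover have "(\<lambda>i. - x i) \<in> SP (m-1)" using SP_neg[OF xS] .
      ultimately show False using em by (metis image_eqI)
    qed
  qed
  have hSP: "h p \<in> SP m" if "fst p \<in> {0..1}" "snd p \<in> SP m" for p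
    unfolding h_def using Knz[OF that] Ksupp that by (intro nz_SP) auto
  have ck': "continuous_on (SP m) k"
    using ck by (simp add: cmap_nsphere_iff)
  have ckc: "continuous_on ({0..1} \<times> SP m) (\<lambda>p. k (snd p) j)" for j
    by (intro cont_coord_comp continuous_on_compose2[OF ck'] continuous_intros) auto
  have cK: "continuous_on ({0..1} \<times> SP m) (\<lambda>p. K p j)" for j
  proof -
    have csnd: "continuous_on ({0..1} \<times> SP m) (\<lambda>p::real \<times> (nat\<Rightarrow>real). snd p i)" for i
      by (rule cont_coord_comp) (intro continuous_intros)
    show ?thesis
      unfolding K_def by (cases "j = m") (simp_all, (intro continuous_on_mult continuous_on_diff continuous_on_add continuous_on_const continuous_on_fst continuous_on_id continuous_on_power ckc csnd)+)
  qed
  have ch: "continuous_on ({0..1} \<times> SP m) h"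
    unfolding h_def nz_def sqs_def
    apply (rule continuous_on_coordinatewise_then_product)
    subgoal for i
      apply (rule continuous_on_divide[OF cK])
       apply (intro continuous_intros cK)
      using Knz by (auto simp: sqs_def)
    done
  define F1 where "F1 = (\<lambda>x. h (1, x))"
  have hom: "homotopic_with (\<lambda>x. True) (nsphere m) (nsphere m) k F1"
  proof -
    have cmh: "continuous_map (prod_topology (top_of_set {0..1}) (top_of_set (SP m))) (top_of_set (SP m)) h"
    proof -
      have eq: "prod_topology (top_of_set {0..1::real}) (top_of_set (SP m)) = top_of_set ({0..1} \<times> SP m)"
        by simp
      have "h \<in> ({0..1} \<times> SP m) \<rightarrow> SP m"
        using hSP by auto
      then show ?thesis
        unfolding eq continuous_map_subtopology_eu using ch by blast
    qed
    have "homotopic_with (\<lambda>x. True) (top_of_set (SP m)) (top_of_set (SP m)) (\<lambda>x. h (0, x)) F1"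
      unfolding homotopic_with_def
      apply (rule exI[of _ h])
      apply (intro conjI cmh)
      by (auto simp: F1_def)
    then have "homotopic_with (\<lambda>x. True) (nsphere m) (nsphere m) (\<lambda>x. h (0, x)) F1"
      by (simp only: nsphere_top[symmetric])
    then show ?thesis
    proof (rule homotopic_with_eq)
      fix x assume "x \<in> topspace (nsphere m)"
      then have "K (0, x) = k x" "k x \<in> SP m"
        using kSP by (auto simp: K_def fun_eq_iff)
      then show "k x = h (0, x)" by (simp add: h_def nz_id)
    qed auto
  qed
  have cF1: "continuous_map (nsphere m) (nsphere m) F1"
    using hom homotopic_with_imp_continuous_maps by blast
  have F1odd: "F1 (\<lambda>i. - x i) = (\<lambda>i. - F1 x i)" if "x \<in> SP m" for x
  proof -
    have "K (1, \<lambda>i. - x i) = (\<lambda>i. - K (1, x) i)"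
      using kodd[OF that] by (auto simp: K_def fun_eq_iff)
    then show ?thesis by (simp add: F1_def h_def nz_neg)
  qed
  have F1eq: "F1 x \<in> SP (m-1)" if "x \<in> SP (m-1)" for x
  proof -
    have x: "x \<in> SP m" "x m = 0" using SP_minus1[OF m that] by auto
    have "F1 x \<in> SP m" using hSP[of "(1,x)"] x by (simp add: F1_def)
    moreover have "F1 x m = 0" using x by (simp add: F1_def h_def nz_def K_def)
    ultimately show ?thesis using topspace_nsphere_minus1 by fastforce
  qed
  have step: "even (Brouwer_degree2 m F1 - Brouwer_degree2 (m - Suc 0) F1)"
    by (rule Borsuk_odd_mapping_degree_step[OF cF1]) (use F1odd F1eq in auto)
  have cF1': "continuous_map (nsphere (m-1)) (nsphere (m-1)) F1"
  proof -
    have "SP (m-1) \<subseteq> SP m" using SP_minus1[OF m] by blast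
    then have "continuous_on (SP (m-1)) F1"
      using cF1 by (auto simp: cmap_nsphere_iff intro: continuous_on_subset)
    then show ?thesis using F1eq by (auto simp: cmap_nsphere_iff)
  qed
  have "odd (Brouwer_degree2 (m-1) F1)"
    by (rule IH[OF cF1']) (use F1odd SP_minus1[OF m] in auto)
  then have "odd (Brouwer_degree2 m F1)" using step by simp
  moreover have "Brouwer_degree2 m k = Brouwer_degree2 m F1"
    by (rule Brouwer_degree2_homotopic[OF hom])
  ultimately show ?thesis by simp
qed

lemma SP0: "x \<in> SP 0 \<Longrightarrow> x = (\<lambda>i. if i = 0 then 1 else 0) \<or> x = (\<lambda>i. if i = 0 then -1 else 0)"
proof -
  assume x: "x \<in> SP 0"
  then have "(x 0)^2 = 1" "\<And>i. 0 < i \<Longrightarrow> x i = 0" by (auto simp: topspace_nsphere_iff)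
  then have "x 0 = 1 \<or> x 0 = -1" by (simp add: power2_eq_1_iff)
  then show ?thesis using \<open>\<And>i. 0 < i \<Longrightarrow> x i = 0\<close> by (auto simp: fun_eq_iff)
qed

lemma Cbase:
  assumes cf: "continuous_map (nsphere 0) (nsphere 0) f"
    and odd: "\<And>x. x \<in> SP 0 \<Longrightarrow> f (\<lambda>i. - x i) = (\<lambda>i. - f x i)"
  shows "odd (Brouwer_degree2 0 f)"
proof -
  define e where "e = (\<lambda>i::nat. if i = 0 then (1::real) else 0)"
  have e: "e \<in> SP 0" unfolding e_def by (rule in_topspace_nsphere)
  have me: "(\<lambda>i. - e i) = (\<lambda>i. if i = 0 then -1 else 0)" by (auto simp: e_def)
  have fe: "f e \<in> SP 0" using cf e by (auto simp: continuous_map_def)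
  have fme: "f (\<lambda>i. - e i) = (\<lambda>i. - f e i)" using odd[OF e] .
  have allx: "x = e \<or> x = (\<lambda>i. - e i)" if "x \<in> SP 0" for x
    using SP0[OF that] me by (auto simp: e_def)
  show ?thesis
  proof (cases "f e = e")
    case True
    have "Brouwer_degree2 0 f = Brouwer_degree2 0 id"
    proof (rule Brouwer_degree2_eq)
      fix x assume "x \<in> SP 0"
      then show "f x = id x" using allx True fme by auto
    qed
    then show ?thesis by simp
  next
    case False
    then have fe': "f e = (\<lambda>i. - e i)" using allx[OF fe] by simp
    have "Brouwer_degree2 0 f = Brouwer_degree2 0 (\<lambda>x i. if i = 0 then -x i else x i)"
    proof (rule Brouwer_degree2_eq)
      fix x assume "x \<in> SP 0"
      then show "f x = (\<lambda>i. if i = 0 then -x i else x i)"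
      proof (rule disjE[OF allx])
        assume xe: "x = e"
        show ?thesis unfolding xe fe' by (rule ext) (simp add: e_def)
      next
        assume xe: "x = (\<lambda>i. - e i)"
        show ?thesis unfolding xe fme fe' by (rule ext) (simp add: e_def)
      qed
    qed
    then show ?thesis by (simp add: Brouwer_degree2_reflection)
  qed
qed

definition ipm :: "nat \<Rightarrow> (nat \<Rightarrow> real) \<Rightarrow> (nat \<Rightarrow> real) \<Rightarrow> real" where
  "ipm m x u = (\<Sum>i\<le>m. x i * u i)"

definition hh :: "nat \<Rightarrow> (nat \<Rightarrow> real) \<Rightarrow> (nat \<Rightarrow> real) \<Rightarrow> (nat \<Rightarrow> real)" where
  "hh m u x = (\<lambda>i. x i - (2 * ipm m x u / ipm m u u) * u i)"

lemma ipm_hh: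
  assumes "ipm m u u \<noteq> 0"
  shows "ipm m (hh m u x) u = - ipm m x u"
proof -
  define c where "c = 2 * ipm m x u / ipm m u u"
  have "ipm m (hh m u x) u = (\<Sum>i\<le>m. (x i - c * u i) * u i)"
    by (simp add: ipm_def hh_def c_def)
  also have "\<dots> = ipm m x u - c * ipm m u u"
    by (simp add: ipm_def left_diff_distrib sum_subtractf sum_distrib_left mult.assoc)
  also have "c * ipm m u u = 2 * ipm m x u" using assms by (simp add: c_def)
  finally show ?thesis by simp
qed

lemma hh_hh:
  assumes "ipm m u u \<noteq> 0"
  shows "hh m u (hh m u x) = x"
proof -
  have "hh m u (hh m u x) = (\<lambda>i. hh m u x i - (2 * ipm m (hh m u x) u / ipm m u u) * u i)"
    by (rule hh_def)
  also have "\<dots> = (\<lambda>i. hh m u x i + (2 * ipm m x u / ipm m u u) * u i)"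
    by (simp add: ipm_hh[OF assms])
  also have "\<dots> = x" by (simp add: hh_def)
  finally show ?thesis .
qed

lemma hh_neg: "hh m u (\<lambda>i. - x i) = (\<lambda>i. - hh m u x i)"
  by (simp add: hh_def ipm_def sum_negf)

lemma hh_SP:
  assumes "ipm m u u \<noteq> 0" "\<And>i. m < i \<Longrightarrow> u i = 0" "x \<in> SP m"
  shows "hh m u x \<in> SP m"
proof -
  define c where "c = 2 * ipm m x u / ipm m u u"
  have cc: "c * ipm m u u = 2 * ipm m x u" using assms(1) by (simp add: c_def)
  have "(\<Sum>i\<le>m. (hh m u x i)^2) = (\<Sum>i\<le>m. (x i)^2 - 2 * c * (x i * u i) + c^2 * (u i * u i))"
    by (simp add: hh_def c_def power2_diff power2_eq_square algebra_simps)
  also have "\<dots> = (\<Sum>i\<le>m. (x i)^2) - 2 * c * ipm m x u + c^2 * ipm m u u"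
    by (simp add: ipm_def sum.distrib sum_subtractf sum_distrib_left)
  also have "\<dots> = (\<Sum>i\<le>m. (x i)^2)"
    using cc by (simp add: power2_eq_square algebra_simps)
  finally show ?thesis using assms by (simp add: topspace_nsphere_iff hh_def)
qed

lemma cont_hh: "ipm m u u \<noteq> 0 \<Longrightarrow> continuous_on S (hh m u)"
  unfolding hh_def
  apply (intro continuous_on_coordinatewise_then_product continuous_intros)
  unfolding ipm_def by (intro continuous_intros) auto

lemma Cind:
  "m < CARD('n::finite) \<Longrightarrow> continuous_map (nsphere m) (nsphere m) f \<Longrightarrow>
   (\<And>x. x \<in> SP m \<Longrightarrow> f (\<lambda>i. - x i) = (\<lambda>i. - f x i)) \<Longrightarrow> odd (Brouwer_degree2 m f)"
proof (induction m arbitrary: f)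
  case 0
  then show ?case using Cbase by blast
next
  case (Suc m')
  define m where "m = Suc m'"
  have m: "m < CARD('n)" "m \<noteq> 0" using Suc.prems by (auto simp: m_def)
  have cf: "continuous_map (nsphere m) (nsphere m) f" using Suc.prems by (simp add: m_def)
  have fodd: "\<And>x. x \<in> SP m \<Longrightarrow> f (\<lambda>i. - x i) = (\<lambda>i. - f x i)" using Suc.prems by (simp add: m_def)
  obtain g w where cg: "continuous_map (nsphere m) (nsphere m) g"
    and godd: "\<forall>x\<in>SP m. g (\<lambda>i. - x i) = (\<lambda>i. - g x i)"
    and hom: "homotopic_with (\<lambda>x. True) (nsphere m) (nsphere m) f g"
    and w: "w \<in> SP m" "w \<notin> g ` SP (m - 1)"
    using GPn[where 'n='n, OF m cf fodd] by blast
  define em where "em = (\<lambda>i::nat. if i = m then (1::real) else 0)"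
  define w2 where "w2 = (if w = em then (\<lambda>i. - w i) else w)"
  have w2: "w2 \<in> SP m" "w2 \<notin> g ` SP (m - 1)" "w2 \<noteq> em"
  proof -
    show "w2 \<in> SP m"
    proof (cases "w = em")
      case True then show ?thesis using SP_neg[OF w(1)] by (simp add: w2_def)
    qed (use w(1) in \<open>simp add: w2_def\<close>)
    show "w2 \<noteq> em" by (auto simp: w2_def em_def fun_eq_iff)
    show "w2 \<notin> g ` SP (m - 1)"
    proof
      assume "w2 \<in> g ` SP (m - 1)"
      then obtain x where x: "x \<in> SP (m-1)" "w2 = g x" by blast
      show False
      proof (cases "w = em")
        case True
        have gx: "g x = (\<lambda>i. - w i)" using x(2) True by (simp add: w2_def)
        have "g (\<lambda>i. - x i) = (\<lambda>i. - g x i)" using godd SP_minus1[OF m(2) x(1)] by blast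
        then have "g (\<lambda>i. - x i) = w" using gx by simp
        then show False using w(2) SP_neg[OF x(1)] by blast
      next
        case False then show False using x w(2) by (auto simp: w2_def)
      qed
    qed
  qed
  define u where "u = (\<lambda>i. w2 i - em i)"
  have usupp: "\<And>i. m < i \<Longrightarrow> u i = 0" using w2(1) by (auto simp: u_def em_def topspace_nsphere_iff)
  have w2sq: "(\<Sum>i\<le>m. (w2 i)^2) = 1" using w2(1) by (simp add: topspace_nsphere_iff)
  have uu: "ipm m u u = 2 - 2 * w2 m"
  proof -
    have "ipm m u u = (\<Sum>i\<le>m. (w2 i)^2 - 2 * (if i = m then w2 i else 0) + (if i = m then 1 else 0))"
      by (auto simp: ipm_def u_def em_def power2_eq_square algebra_simps intro!: sum.cong)
    also have "\<dots> = (\<Sum>i\<le>m. (w2 i)^2) - 2 * (\<Sum>i\<le>m. if i = m then w2 i else 0) + (\<Sum>i\<le>m. if i = m then 1 else (0::real))"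
      by (simp only: sum.distrib sum_subtractf sum_distrib_left)
    also have "\<dots> = 2 - 2 * w2 m"
      using w2sq by simp
    finally show ?thesis .
  qed
  have w2m: "w2 m \<noteq> 1"
  proof
    assume "w2 m = 1"
    then have "w2 = em"
      using topspace_nsphere_1_eq_0[OF w2(1), of m] usupp w2(1)
      by (auto simp: em_def fun_eq_iff)
    then show False using w2(3) by simp
  qed
  have unz: "ipm m u u \<noteq> 0" using uu w2m by simp
  define H where "H = hh m u"
  have Hem: "H em = w2"
  proof -
    have "ipm m em u = w2 m - 1"
      by (simp add: ipm_def em_def u_def if_distrib cong: if_cong)
    then have "2 * ipm m em u / ipm m u u = -1"
      using uu w2m by (simp add: field_simps)
    then show ?thesis by (simp add: H_def hh_def u_def fun_eq_iff)
  qed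
  have HSP: "H x \<in> SP m" if "x \<in> SP m" for x
    unfolding H_def using hh_SP[OF unz usupp that] .
  have cH: "continuous_map (nsphere m) (nsphere m) H"
    using HSP cont_hh[OF unz] by (auto simp: cmap_nsphere_iff H_def)
  have HH: "H (H x) = x" for x by (simp add: H_def hh_hh[OF unz])
  have homH: "homeomorphic_maps (nsphere m) (nsphere m) H H"
    using cH HH by (auto simp: homeomorphic_maps_def)
  have degH: "\<bar>Brouwer_degree2 m H\<bar> = 1"
    using Brouwer_degree2_homeomorphic_maps[OF homH] by blast
  define k where "k = H \<circ> g"
  have ck: "continuous_map (nsphere m) (nsphere m) k"
    unfolding k_def using cg cH by (rule continuous_map_compose)
  have kodd: "k (\<lambda>i. - x i) = (\<lambda>i. - k x i)" if "x \<in> SP m" for x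
    using godd that by (simp add: k_def H_def hh_neg)
  have kem: "em \<notin> k ` SP (m-1)"
  proof
    assume "em \<in> k ` SP (m-1)"
    then obtain x where x: "x \<in> SP (m-1)" "em = H (g x)" by (auto simp: k_def)
    then have "g x = w2" using HH[of "g x"] Hem by simp
    then show False using w2(2) x(1) by (metis image_eqI)
  qed
  have IH: "odd (Brouwer_degree2 (m-1) f')"
    if "continuous_map (nsphere (m-1)) (nsphere (m-1)) f'"
       "\<And>x. x \<in> SP (m-1) \<Longrightarrow> f' (\<lambda>i. - x i) = (\<lambda>i. - f' x i)" for f'
    using Suc.IH[of f'] that Suc.prems(1) by (simp add: m_def)
  have "odd (Brouwer_degree2 m k)"
    by (rule Cstep[OF m(2) IH ck kodd]) (use kem em_def in auto)
  moreover have "Brouwer_degree2 m k = Brouwer_degree2 m H * Brouwer_degree2 m g"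
    unfolding k_def by (rule Brouwer_degree2_compose[OF cg cH])
  ultimately have "odd (Brouwer_degree2 m g)" by simp
  moreover have "Brouwer_degree2 m f = Brouwer_degree2 m g"
    by (rule Brouwer_degree2_homotopic[OF hom])
  ultimately show ?case by (simp add: m_def)
qed

lemma BU:
  fixes G :: "(nat \<Rightarrow> real) \<Rightarrow> (nat \<Rightarrow> real)"
  assumes d: "d < CARD('n::finite)"
    and cG: "continuous_on (SP d) G"
    and Godd: "\<And>y. y \<in> SP d \<Longrightarrow> G (\<lambda>i. - y i) = (\<lambda>i. - G y i)"
    and Gsupp: "\<And>y i. y \<in> SP d \<Longrightarrow> d \<le> i \<Longrightarrow> G y i = 0"
  shows "\<exists>y\<in>SP d. G y = (\<lambda>i. 0)"
proof (rule ccontr)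
  assume nz0: "\<not> (\<exists>y\<in>SP d. G y = (\<lambda>i. 0))"
  show False
  proof (cases "d = 0")
    case True
    have "(\<lambda>n. if n = 0 then 1 else 0) \<in> SP d" by (rule in_topspace_nsphere)
    moreover have "G y = (\<lambda>i. 0)" if "y \<in> SP d" for y
      using Gsupp[OF that] True by auto
    ultimately show False using nz0 by blast
  next
    case False
    have sq: "sqs (d-1) (G y) \<noteq> 0" if y: "y \<in> SP d" for y
    proof
      assume "sqs (d-1) (G y) = 0"
      then have z: "\<forall>j\<in>{..d-1}. (G y j)^2 = 0"
        unfolding sqs_def by (subst sum_nonneg_eq_0_iff[symmetric]) auto
      have "G y = (\<lambda>i. 0)"
      proof
        fix i show "G y i = 0"
        proof (cases "i < d")
          case True then show ?thesis using bspec[OF z, of i] by simp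
        next
          case False then show ?thesis using Gsupp[OF y] by simp
        qed
      qed
      then show False using nz0 y by blast
    qed
    define f where "f = (\<lambda>y. nz (d-1) (G y))"
    have fS: "f y \<in> SP (d-1)" if "y \<in> SP d" for y
      unfolding f_def using sq[OF that] Gsupp[OF that] by (intro nz_SP) auto
    have SPsub: "SP (d-1) \<subseteq> SP d" using SP_minus1[OF False] by blast
    have cf0: "continuous_on (SP d) f"
      unfolding f_def nz_def sqs_def
      apply (rule continuous_on_coordinatewise_then_product)
      subgoal for i
        apply (rule continuous_on_divide[OF cont_coord_comp[OF cG]])
         apply (intro continuous_intros cont_coord_comp[OF cG])
        using sq by (auto simp: sqs_def)
      done
    have cf: "continuous_map (nsphere d) (nsphere d) f"
      using cf0 fS SPsub by (auto simp: cmap_nsphere_iff)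
    define em where "em = (\<lambda>i::nat. if i = d then (1::real) else 0)"
    have em: "em \<in> SP d"
    proof -
      have "(\<Sum>i\<le>d. (em i)^2) = (\<Sum>i\<le>d. if i = d then 1 else 0)"
        by (rule sum.cong) (auto simp: em_def)
      then show ?thesis by (simp add: topspace_nsphere_iff em_def)
    qed
    have "em \<notin> f ` SP d"
    proof
      assume "em \<in> f ` SP d"
      then obtain y where "y \<in> SP d" "em = f y" by blast
      then have "em \<in> SP (d-1)" using fS by simp
      then have "em d = 0" using SP_minus1[OF False] by blast
      then show False by (simp add: em_def)
    qed
    then have deg0: "Brouwer_degree2 d f = 0"
      using em by (intro Brouwer_degree2_nonsurjective[OF cf]) blast
    have fodd: "f (\<lambda>i. - y i) = (\<lambda>i. - f y i)" if "y \<in> SP d" for y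
      using Godd[OF that] by (simp add: f_def nz_neg)
    have step: "even (Brouwer_degree2 d f - Brouwer_degree2 (d - Suc 0) f)"
      by (rule Borsuk_odd_mapping_degree_step[OF cf]) (use fodd fS SPsub in auto)
    have cf': "continuous_map (nsphere (d-1)) (nsphere (d-1)) f"
      using continuous_on_subset[OF cf0 SPsub] fS SPsub by (auto simp: cmap_nsphere_iff)
    have "odd (Brouwer_degree2 (d-1) f)"
      by (rule Cind[where 'n='n, OF _ cf']) (use d fodd SPsub in auto)
    then show False using step deg0 by simp
  qed
qed

lemma cont_ofV_UNIV: "continuous_on UNIV (ofV :: real^'n::finite \<Rightarrow> _)"
  unfolding ofV_def
  apply (rule continuous_on_coordinatewise_then_product)
  subgoal for i by (cases "i < CARD('n)") (auto intro!: continuous_intros)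
  done

lemma compact_SP:
  assumes "d < CARD('n::finite)"
  shows "compact (SP d)"
proof -
  have "SP d = (ofV :: real^'n \<Rightarrow> _) ` (sphere 0 1 \<inter> Vm d)"
  proof
    show "SP d \<subseteq> (ofV :: real^'n \<Rightarrow> _) ` (sphere 0 1 \<inter> Vm d)"
    proof
      fix y assume y: "y \<in> SP d"
      have "y = ofV (toV y :: real^'n)"
        using y assms by (simp add: ofV_toV nsphere_zero_beyond)
      then show "y \<in> (ofV :: real^'n \<Rightarrow> _) ` (sphere 0 1 \<inter> Vm d)"
        using toV_sphere[OF assms y] by blast
    qed
    show "(ofV :: real^'n \<Rightarrow> _) ` (sphere 0 1 \<inter> Vm d) \<subseteq> SP d"
      using ofV_sphere[OF assms] by blast
  qed
  moreover have "compact (sphere 0 1 \<inter> (Vm d :: (real^'n) set))"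
    by (simp add: closed_subspace compact_Int_closed subspace_Vm)
  ultimately show ?thesis
    using compact_continuous_image[OF continuous_on_subset[OF cont_ofV_UNIV]] by auto
qed

lemma poly_pos:
  fixes y :: "nat \<Rightarrow> real" and t :: "'n \<Rightarrow> real"
  assumes y: "y \<in> SP d" and inj: "inj t" and J: "card (J::'n set) = Suc d" "finite J"
  shows "0 < (\<Sum>j\<in>J. \<bar>\<Sum>k\<le>d. y k * (t j)^k\<bar>)"
proof (rule ccontr)
  assume "\<not> ?thesis"
  moreover have "0 \<le> (\<Sum>j\<in>J. \<bar>\<Sum>k\<le>d. y k * (t j)^k\<bar>)"
    by (intro sum_nonneg) auto
  ultimately have "(\<Sum>j\<in>J. \<bar>\<Sum>k\<le>d. y k * (t j)^k\<bar>) = 0" by linarith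
  then have z: "\<forall>j\<in>J. (\<Sum>k\<le>d. y k * (t j)^k) = 0"
    using J by (subst (asm) sum_nonneg_eq_0_iff) auto
  define p where "p = (\<Sum>k\<le>d. Polynomial.monom (y k) k)"
  have polyp: "poly p x = (\<Sum>k\<le>d. y k * x^k)" for x
    by (simp add: p_def poly_sum poly_monom)
  have coeffp: "Polynomial.coeff p i = (if i \<le> d then y i else 0)" for i
    by (simp add: p_def coeff_sum coeff_monom)
  have "p \<noteq> 0"
  proof
    assume "p = 0"
    then have "\<forall>i\<le>d. y i = 0" using coeffp by (metis coeff_0)
    then have "(\<Sum>i\<le>d. (y i)^2) = 0" by simp
    then show False using y by (simp add: topspace_nsphere_iff)
  qed
  have degp: "Polynomial.degree p \<le> d" by (rule degree_le) (simp add: coeffp)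
  have sub: "t ` J \<subseteq> {x. poly p x = 0}" using z polyp by auto
  have "card (t ` J) \<le> card {x. poly p x = 0}"
    by (rule card_mono[OF poly_roots_finite[OF \<open>p \<noteq> 0\<close>] sub])
  also have "\<dots> \<le> Polynomial.degree p" by (rule card_poly_roots_bound[OF \<open>p \<noteq> 0\<close>])
  finally have "card (t ` J) \<le> d" using degp by simp
  moreover have "card (t ` J) = Suc d"
    using J inj by (simp add: card_image inj_on_subset)
  ultimately show False by simp
qed

lemma clamp_abs: "\<bar>max (-1) (min 1 (s::real))\<bar> \<le> 1"
  by (auto simp: max_def min_def)

lemma clamp_one: "1 \<le> \<bar>s::real\<bar> \<Longrightarrow> \<bar>max (-1) (min 1 s)\<bar> = 1"
proof -
  assume "1 \<le> \<bar>s\<bar>"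
  then have "1 \<le> s \<or> s \<le> -1" by linarith
  then show ?thesis by (auto simp: max_def min_def)
qed

lemma clamp_neg: "max (-1) (min 1 (- s::real)) = - max (-1) (min 1 s)"
  by (auto simp: max_def min_def)

theorem lemma2p5:
  fixes d :: nat and F :: "real^'n \<Rightarrow> (nat \<Rightarrow> real)"
  assumes "d < CARD('n)"
    and "continuous_on (cube_skeleton d) F"
    and "F ` cube_skeleton d \<subseteq> Rd d"
  shows "\<exists>z\<in>cube_skeleton d. F z = F (- z)"
proof -
  note d = assms(1) and cF = assms(2) and FRd = assms(3)
  define t :: "'n \<Rightarrow> real" where "t = (\<lambda>j. real (ix j))"
  have injt: "inj t" unfolding t_def by (rule injI) (simp add: ix_inj)
  define ll where "ll = (\<lambda>j (y::nat \<Rightarrow> real). (\<Sum>k\<le>d. y k * (t j)^k))"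
  define M where "M = (\<lambda>J y. (\<Sum>j\<in>J. \<bar>ll j y\<bar>))"
  define Js where "Js = {J::'n set. card J = Suc d}"
  have cSP: "compact (SP d)" by (rule compact_SP[OF d])
  have neSP: "SP d \<noteq> {}" using in_topspace_nsphere by blast
  have cell: "continuous_on S (ll j)" for j S
    unfolding ll_def by (intro continuous_intros)
  have delta: "\<exists>dl>0. \<forall>y\<in>SP d. dl \<le> M J y" if "J \<in> Js" for J
  proof -
    have "continuous_on (SP d) (M J)"
      unfolding M_def ll_def by (intro continuous_intros)
    then obtain y0 where y0: "y0 \<in> SP d" "\<forall>y\<in>SP d. M J y0 \<le> M J y"
      using continuous_attains_inf[OF cSP neSP] by blast
    have "0 < M J y0"
      unfolding M_def ll_def
      using poly_pos[OF y0(1) injt] that by (simp add: Js_def)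
    then show ?thesis using y0 by blast
  qed
  then have "\<forall>J\<in>Js. \<exists>dl>0. \<forall>y\<in>SP d. dl \<le> M J y" by blast
  then obtain dl where dl: "\<forall>J\<in>Js. 0 < dl J \<and> (\<forall>y\<in>SP d. dl J \<le> M J y)"
    by (metis (no_types) bchoice)
  have finJ: "finite Js" by (rule finite_subset[OF subset_UNIV]) simp
  have neJ: "Js \<noteq> {}"
  proof -
    have "Suc d \<le> card (UNIV::'n set)" using d by simp
    then obtain J :: "'n set" where "card J = Suc d" by (metis obtain_subset_with_card_n)
    then show ?thesis by (auto simp: Js_def)
  qed
  define e0 where "e0 = Min (dl ` Js)"
  have e0pos: "0 < e0" unfolding e0_def using finJ neJ dl by (simp add: Min_gr_iff)
  have e0le: "e0 \<le> dl J" if "J \<in> Js" for J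
    unfolding e0_def using finJ that by simp
  define ep where "ep = e0 / real (Suc d)"
  have epos: "0 < ep" using e0pos by (simp add: ep_def)
  have small: "card {j. \<bar>ll j y\<bar> < ep} \<le> d" if y: "y \<in> SP d" for y
  proof (rule ccontr)
    assume "\<not> ?thesis"
    then have "Suc d \<le> card {j. \<bar>ll j y\<bar> < ep}" by simp
    then obtain J where J: "J \<subseteq> {j. \<bar>ll j y\<bar> < ep}" "card J = Suc d" "finite J"
      by (metis obtain_subset_with_card_n)
    have JJ: "J \<in> Js" using J by (simp add: Js_def)
    have "J \<noteq> {}" using J by auto
    have "M J y < (\<Sum>j\<in>J. ep)"
      unfolding M_def using J \<open>J \<noteq> {}\<close> by (intro sum_strict_mono) auto
    also have "\<dots> = e0" using J by (simp add: ep_def)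
    also have "\<dots> \<le> dl J" by (rule e0le[OF JJ])
    also have "\<dots> \<le> M J y" using dl JJ y by blast
    finally show False by simp
  qed
  define cl :: "real \<Rightarrow> real" where "cl = (\<lambda>s. max (-1) (min 1 s))"
  define E :: "(nat \<Rightarrow> real) \<Rightarrow> real^'n" where "E = (\<lambda>y. \<chi> j. cl (ll j y / ep))"
  have Ei: "E y $ i = cl (ll i y / ep)" for y i by (simp add: E_def)
  have Eskel: "E y \<in> cube_skeleton d" if y: "y \<in> SP d" for y
  proof -
    define sg where "sg = UNIV - {j. \<bar>ll j y\<bar> < ep}"
    have cs: "card sg = CARD('n) - card {j. \<bar>ll j y\<bar> < ep}"
      unfolding sg_def by (rule card_Diff_subset) auto
    have c1: "CARD('n) - d \<le> card sg"
      unfolding cs by (rule diff_le_mono2[OF small[OF y]])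
    have c3: "\<bar>E y $ i\<bar> \<le> 1" for i unfolding Ei cl_def by (rule clamp_abs)
    have c2: "\<bar>E y $ i\<bar> = 1" if "i \<in> sg" for i
    proof -
      have "\<not> \<bar>ll i y\<bar> < ep" using that by (simp add: sg_def)
      then have a: "ep \<le> \<bar>ll i y\<bar>" by linarith
      have b: "\<bar>ll i y / ep\<bar> = \<bar>ll i y\<bar> / ep" using epos by (simp add: abs_divide abs_of_pos)
      have "1 \<le> \<bar>ll i y\<bar> / ep" using a epos by (simp add: le_divide_eq_1_pos)
      then have "1 \<le> \<bar>ll i y / ep\<bar>" unfolding b .
      then show ?thesis unfolding Ei cl_def by (rule clamp_one)
    qed
    show ?thesis
      unfolding cube_skeleton_def mem_Collect_eq
      apply (rule conjI)
      using c3 apply blast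
      apply (rule exI[of _ sg])
      using c1 c2 by blast
  qed
  have lneg: "ll j (\<lambda>i. - y i) = - ll j y" for j y by (simp add: ll_def sum_negf)
  have Eneg: "E (\<lambda>i. - y i) = - E y" for y
    by (simp add: vec_eq_iff Ei lneg cl_def clamp_neg)
  have cdiv: "continuous_on (SP d) (\<lambda>y. ll j y / ep)" for j
    using epos by (intro continuous_on_divide cell continuous_on_const) auto
  have cE: "continuous_on (SP d) E"
    unfolding E_def cl_def
    apply (rule continuous_on_vec_lambda)
    apply (rule continuous_on_max[OF continuous_on_const])
    apply (rule continuous_on_min[OF continuous_on_const])
    by (rule cdiv)
  have Esub: "E ` SP d \<subseteq> cube_skeleton d" using Eskel by blast
  have cFE: "continuous_on (SP d) (\<lambda>y. F (E y))"
    by (rule continuous_on_compose2[OF cF cE Esub])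
  have cneg: "continuous_on (SP d) (\<lambda>y::nat\<Rightarrow>real. \<lambda>i. - y i)"
    by (rule continuous_on_coordinatewise_then_product) (intro continuous_intros)
  have negsub: "(\<lambda>y::nat\<Rightarrow>real. \<lambda>i. - y i) ` SP d \<subseteq> SP d" using SP_neg by blast
  have cFEn: "continuous_on (SP d) (\<lambda>y. F (E (\<lambda>i. - y i)))"
    by (rule continuous_on_compose2[OF cFE cneg negsub])
  define G where "G = (\<lambda>y. \<lambda>i. F (E y) i - F (E (\<lambda>i. - y i)) i)"
  have cG: "continuous_on (SP d) G"
    unfolding G_def
    apply (rule continuous_on_coordinatewise_then_product)
    apply (rule continuous_on_diff)
     apply (rule cont_coord_comp[OF cFE])
    apply (rule cont_coord_comp[OF cFEn])
    done
  have Godd: "G (\<lambda>i. - y i) = (\<lambda>i. - G y i)" for y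
    by (simp add: G_def)
  have Gsupp: "G y i = 0" if "y \<in> SP d" "d \<le> i" for y i
  proof -
    have "F (E y) \<in> Rd d" "F (E (\<lambda>i. - y i)) \<in> Rd d"
      using FRd Eskel[OF that(1)] Eskel[OF SP_neg[OF that(1)]] by auto
    then show ?thesis using that(2) by (simp add: G_def Rd_def)
  qed
  obtain y where y: "y \<in> SP d" "G y = (\<lambda>i. 0)"
    using BU[where 'n='n, OF d cG Godd Gsupp] by blast
  have "F (E y) = F (E (\<lambda>i. - y i))"
    using y(2) by (auto simp: G_def fun_eq_iff)
  then have "F (E y) = F (- E y)" by (simp add: Eneg)
  then show ?thesis using Eskel[OF y(1)] by blast
qed

end
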